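(* Consider any realized trajectory of the patient model in the context, let $\lambda_1>0$, $z_t:=[x_t\ u_t^\top\ d_t^\top]^\top$ and $\bar V_t:=\lambda_1I_{2M+1}+\sum_{s=1}^{t-1}z_sz_s^\top$. Then $$\sum_{t=1}^T\|z_t\|^2_{\bar V_t^{-1}}\leq(2M+1)\log\Big(1+\frac{T(C_x^2+2)}{(2M+1)\lambda_1}\Big)\Big[2+\frac{C_x^2+2}{\log(2)\lambda_1}\Big],$$ where $C_x:=\frac{\bar b+\bar c+\bar w}{1-\bar a}$.
   Context: Patient model: $M\geq1$ treatments; $\mathcal U:=\{v\in\{0,1\}^M:\|v\|_0\leq1\}$. $x_{t+1}=ax_t+b^\top u_t+c^\top d_t+w_t$ with actions $u_t\in\mathcal U$ and adherence $d_t\in\mathcal U$, $d^i_t\mid x_t,u^i_t\sim\mathrm{Bernoulli}(u^i_t\sigma(x_t+\mu_i))$, $\sigma$ the sigmoid; $x_1$ distributed as the noise. Parameters $a\in[0,\bar a]$ (known $\bar a\in(0,1)$), $\|b\|_\infty\leq\bar b$, $\|c\|_\infty\leq\bar c$, $\mu\in[-\bar\mu,\bar\mu]^M$. Noise i.i.d., zero-symmetric, $\sigma_s^2$-subgaussian, $|w_t|\leq\bar w$ ($\bar w>0$), log-concave density, known variance. $\|v\|_A:=\sqrt{v^\top Av}$. *)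

theory Defs
  imports Complex_Main "Jordan_Normal_Form.Gauss_Jordan_Elimination"
begin

definition treat_set :: "nat \<Rightarrow> real vec set" where
  "treat_set M = {v \<in> carrier_vec M. (\<forall>i<M. v $ i \<in> {0, 1}) \<and> card {i. i < M \<and> v $ i \<noteq> 0} \<le> 1}"

definition sup_norm_le :: "nat \<Rightarrow> real vec \<Rightarrow> real \<Rightarrow> bool" where
  "sup_norm_le M v r \<longleftrightarrow> v \<in> carrier_vec M \<and> (\<forall>i<M. \<bar>v $ i\<bar> \<le> r)"

definition zvec :: "real \<Rightarrow> real vec \<Rightarrow> real vec \<Rightarrow> real vec" where
  "zvec xt ut dt = vec 1 (\<lambda>_. xt) @\<^sub>v ut @\<^sub>v dt"

definition Vbar :: "nat \<Rightarrow> real \<Rightarrow> (nat \<Rightarrow> real vec) \<Rightarrow> nat \<Rightarrow> real mat" where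
  "Vbar n lam z t = lam \<cdot>\<^sub>m 1\<^sub>m n + mat n n (\<lambda>(i, j). \<Sum>s\<in>{1..<t}. z s $ i * z s $ j)"

text \<open>Matrix inverse (the library's Gauss-Jordan inverse; Vbar is positive definite hence invertible).\<close>
definition minv :: "real mat \<Rightarrow> real mat" where
  "minv A = the (mat_inverse A)"

definition wnorm_sq :: "real vec \<Rightarrow> real mat \<Rightarrow> real" where
  "wnorm_sq v A = v \<bullet> (A *\<^sub>v v)"

end

theory Submission
  imports Defs "Jordan_Normal_Form.Schur_Decomposition"
begin

definition mtr :: "'a::comm_ring_1 mat \<Rightarrow> 'a" where
  "mtr A = (\<Sum> i < dim_row A. A $$ (i,i))"

lemma mtr_comm:
  assumes A: "A \<in> carrier_mat n m" and B: "B \<in> carrier_mat m n"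
  shows "mtr (A * B) = mtr (B * A)"
proof -
  have "mtr (A * B) = (\<Sum> i < n. \<Sum> k < m. A $$ (i,k) * B $$ (k,i))"
    unfolding mtr_def using A B
    by (auto simp: scalar_prod_def atLeast0LessThan intro!: sum.cong)
  also have "\<dots> = (\<Sum> k < m. \<Sum> i < n. B $$ (k,i) * A $$ (i,k))"
    by (subst sum.swap) (simp add: mult.commute)
  also have "\<dots> = mtr (B * A)"
    unfolding mtr_def using A B
    by (auto simp: scalar_prod_def atLeast0LessThan intro!: sum.cong)
  finally show ?thesis .
qed

lemma mtr_similar:
  assumes A: "A \<in> carrier_mat n n" and sim: "similar_mat_wit A B P Q"
  shows "mtr A = mtr B"
proof -
  note d = similar_mat_witD2[OF A sim]
  have "mtr A = mtr (P * (B * Q))" using d by (simp add: assoc_mult_mat[of P n n B n Q n])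
  also have "\<dots> = mtr ((B * Q) * P)" by (rule mtr_comm[of _ n n], insert d, auto)
  also have "\<dots> = mtr (B * (Q * P))" using d by (simp add: assoc_mult_mat[of B n n Q n P n])
  also have "\<dots> = mtr B" using d by simp
  finally show ?thesis .
qed

lemma ln_prod_list_le:
  fixes xs :: "real list" and m :: real
  assumes "\<forall>x\<in>set xs. x > 0" and m: "m > 0"
  shows "ln (prod_list xs) \<le> length xs * ln m + sum_list xs / m - length xs"
  using assms(1)
proof (induction xs)
  case Nil
  then show ?case by simp
next
  case (Cons x xs)
  have x: "x > 0" and xs: "\<forall>x\<in>set xs. x > 0" using Cons.prems by auto
  have pp: "prod_list xs > 0" using xs by (induction xs) auto
  have "ln (x / m) \<le> x / m - 1" using x m by (intro ln_le_minus_one) auto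
  hence l: "ln x \<le> ln m + x / m - 1" using x m by (simp add: ln_div)
  have "ln (prod_list (x # xs)) = ln x + ln (prod_list xs)" using ln_mult_pos[OF x pp] by simp
  also have "\<dots> \<le> (ln m + x / m - 1) + (length xs * ln m + sum_list xs / m - length xs)"
    using l Cons.IH[OF xs] by linarith
  also have "\<dots> = length (x # xs) * ln m + sum_list (x # xs) / m - length (x # xs)"
    by (simp add: algebra_simps add_divide_distrib)
  finally show ?case .
qed

lemma amgm_list:
  fixes xs :: "real list"
  assumes pos: "\<forall>x\<in>set xs. x > 0" and n: "length xs = n" "n > 0"
  shows "prod_list xs \<le> (sum_list xs / n) ^ n"
proof -
  have sp: "sum_list xs > 0"
    using pos n
  proof (induction xs arbitrary: n)
    case (Cons x xs)
    have "sum_list xs \<ge> 0" using Cons.prems(1) by (induction xs) (auto intro: add_nonneg_nonneg)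
    thus ?case using Cons.prems(1) by simp
  qed simp
  define m where "m = sum_list xs / n"
  have m: "m > 0" using sp n by (simp add: m_def)
  have pp: "prod_list xs > 0" using pos by (induction xs) auto
  have "ln (prod_list xs) \<le> n * ln m + sum_list xs / m - n"
    using ln_prod_list_le[OF pos m] n by simp
  also have "sum_list xs / m = n" using sp n by (simp add: m_def)
  finally have "ln (prod_list xs) \<le> ln (m ^ n)" using m by (simp add: ln_realpow)
  hence "prod_list xs \<le> m ^ n" using pp m by simp
  thus ?thesis by (simp add: m_def)
qed

lemma det_le_mtr:
  fixes V :: "real mat"
  assumes V: "V \<in> carrier_mat n n" and n: "n > 0"
    and ev: "\<And>v e. eigenvector (map_mat complex_of_real V) v e \<Longrightarrow> e = complex_of_real (Re e) \<and> Re e > 0"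
  shows "0 < det V \<and> det V \<le> (mtr V / n)^n"
proof -
  define A where "A = map_mat complex_of_real V"
  have A: "A \<in> carrier_mat n n" using V by (simp add: A_def)
  obtain es where es: "char_poly A = (\<Prod>a\<leftarrow>es. [:- a, 1:])" "length es = n"
    using char_poly_factorized[OF A] by blast
  obtain B P Q where sd: "schur_decomposition A es = (B,P,Q)"
    by (cases "schur_decomposition A es") auto
  from schur_decomposition[OF A es(1) sd]
  have sim: "similar_mat_wit A B P Q" and ut: "upper_triangular B" and dg: "diag_mat B = es" by auto
  note d = similar_mat_witD2[OF A sim]
  have detA: "det A = prod_list es"
    using det_similar[of A B] sim det_upper_triangular[OF ut d(5)] dg unfolding similar_mat_def by auto
  have trA: "mtr A = sum_list es"
  proof -
    have "mtr A = mtr B" by (rule mtr_similar[OF A sim])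
    also have "\<dots> = sum_list (diag_mat B)" unfolding mtr_def diag_mat_def using d(5)
      by (simp add: sum_set_upt_conv_sum_list_nat[symmetric] atLeast0LessThan)
    finally show ?thesis using dg by simp
  qed
  have real: "e = complex_of_real (Re e) \<and> Re e > 0" if e: "e \<in> set es" for e
  proof -
    have "poly (char_poly A) e = 0" unfolding es(1) using e
      by (induction es) auto
    then have "eigenvalue A e" using eigenvalue_root_char_poly[OF A] by simp
    then obtain v where "eigenvector A v e" unfolding eigenvalue_def by blast
    thus ?thesis using ev A_def by blast
  qed
  define rs where "rs = map Re es"
  have es_rs: "es = map complex_of_real rs" unfolding rs_def using real
    by (induction es) auto
  have rs_pos: "\<forall>r\<in>set rs. r > 0" unfolding rs_def using real by auto
  have len: "length rs = n" using es(2) rs_def by simp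
  have "complex_of_real (det V) = det A" unfolding A_def by (simp add: of_real_hom.hom_det)
  also have "\<dots> = complex_of_real (prod_list rs)" unfolding detA es_rs
    by (induction rs) auto
  finally have dV: "det V = prod_list rs" by simp
  have "complex_of_real (mtr V) = mtr A" unfolding A_def mtr_def using V by simp
  also have "\<dots> = complex_of_real (sum_list rs)" unfolding trA es_rs
    by (induction rs) auto
  finally have tV: "mtr V = sum_list rs" by simp
  have "0 < prod_list rs" using rs_pos by (induction rs) auto
  thus ?thesis unfolding dV tV using amgm_list[OF rs_pos len n] by simp
qed

lemma Vbar_carrier[simp]: "Vbar n lam z t \<in> carrier_mat n n"
  unfolding Vbar_def by auto

lemma Vbar_dims[simp]: "dim_row (Vbar n lam z t) = n" "dim_col (Vbar n lam z t) = n"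
  unfolding Vbar_def by auto

lemma Vbar_index:
  assumes "i < n" "j < n"
  shows "Vbar n lam z t $$ (i,j) = lam * (if i = j then 1 else 0) + (\<Sum>s\<in>{1..<t}. z s $ i * z s $ j)"
  using assms unfolding Vbar_def by auto

lemma cnorm_sq: "(complex_of_real (cmod x))\<^sup>2 = x * cnj x"
  by (metis complex_norm_square of_real_power)

lemma Vbar_ev:
  assumes lam: "lam > 0"
    and evv: "eigenvector (map_mat complex_of_real (Vbar n lam z t)) v e"
  shows "e = complex_of_real (Re e) \<and> Re e > 0"
proof -
  define A where "A = map_mat complex_of_real (Vbar n lam z t)"
  define S where "S = {1..<t}"
  have A: "A \<in> carrier_mat n n" unfolding A_def by simp
  from evv have v: "v \<in> carrier_vec n" and v0: "v \<noteq> 0\<^sub>v n" and Av: "A *\<^sub>v v = e \<cdot>\<^sub>v v"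
    unfolding eigenvector_def A_def[symmetric] using A by auto
  define w where "w s = (\<Sum>j<n. complex_of_real (z s $ j) * v $ j)" for s
  have Avi: "(A *\<^sub>v v) $ i = complex_of_real lam * v $ i + (\<Sum>s\<in>S. complex_of_real (z s $ i) * w s)"
    if i: "i < n" for i
  proof -
    have "(A *\<^sub>v v) $ i = (\<Sum>j<n. A $$ (i,j) * v $ j)"
      using A v i by (simp add: mult_mat_vec_def scalar_prod_def atLeast0LessThan)
    also have "\<dots> = (\<Sum>j<n. (if i = j then complex_of_real lam * v $ j else 0)
         + (\<Sum>s\<in>S. complex_of_real (z s $ i) * (complex_of_real (z s $ j) * v $ j)))"
      using i by (intro sum.cong refl) (simp add: A_def Vbar_index S_def of_real_sum distrib_right sum_distrib_right mult.assoc)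
    also have "\<dots> = complex_of_real lam * v $ i + (\<Sum>s\<in>S. complex_of_real (z s $ i) * w s)"
      using i by (simp add: sum.distrib sum.swap[of _ S] w_def sum_distrib_left)
    finally show ?thesis .
  qed
  define Nr where "Nr = (\<Sum>i<n. (cmod (v $ i))\<^sup>2)"
  define Sr where "Sr = (\<Sum>s\<in>S. (cmod (w s))\<^sup>2)"
  have cw: "cnj (w s) = (\<Sum>i<n. complex_of_real (z s $ i) * cnj (v $ i))" for s
    unfolding w_def by (simp add: cnj_sum)
  have "(\<Sum>i<n. cnj (v $ i) * (A *\<^sub>v v) $ i) = e * complex_of_real Nr"
  proof -
    have "(\<Sum>i<n. cnj (v $ i) * (A *\<^sub>v v) $ i) = (\<Sum>i<n. e * (cnj (v $ i) * v $ i))"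
      using Av v by (intro sum.cong refl) (simp add: algebra_simps)
    also have "\<dots> = e * complex_of_real Nr"
      unfolding Nr_def by (simp add: sum_distrib_left cnorm_sq mult.commute)
    finally show ?thesis .
  qed
  moreover have "(\<Sum>i<n. cnj (v $ i) * (A *\<^sub>v v) $ i) = complex_of_real (lam * Nr + Sr)"
  proof -
    have "(\<Sum>i<n. cnj (v $ i) * (A *\<^sub>v v) $ i)
        = (\<Sum>i<n. complex_of_real lam * (cnj (v $ i) * v $ i))
          + (\<Sum>i<n. \<Sum>s\<in>S. (complex_of_real (z s $ i) * cnj (v $ i)) * w s)"
      using Avi by (simp add: sum.distrib distrib_left sum_distrib_left algebra_simps)
    also have "(\<Sum>i<n. \<Sum>s\<in>S. (complex_of_real (z s $ i) * cnj (v $ i)) * w s)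
        = (\<Sum>s\<in>S. cnj (w s) * w s)"
      by (subst sum.swap) (simp add: cw sum_distrib_right)
    also have "\<dots> = complex_of_real Sr"
      unfolding Sr_def by (simp add: cnorm_sq mult.commute)
    also have "(\<Sum>i<n. complex_of_real lam * (cnj (v $ i) * v $ i)) = complex_of_real (lam * Nr)"
      unfolding Nr_def by (simp add: sum_distrib_left cnorm_sq mult.commute)
    finally show ?thesis by simp
  qed
  ultimately have eq: "e * complex_of_real Nr = complex_of_real (lam * Nr + Sr)" by simp
  obtain i where i: "i < n" "v $ i \<noteq> 0" using v v0 by (metis eq_vecI carrier_vecD index_zero_vec)
  have "Nr > 0" unfolding Nr_def
    by (rule sum_pos2[of _ i]) (use i in auto)
  moreover have "Sr \<ge> 0" unfolding Sr_def by (simp add: sum_nonneg)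
  ultimately have "e = complex_of_real ((lam * Nr + Sr) / Nr)" using eq
    by (simp add: field_simps)
  moreover have "(lam * Nr + Sr) / Nr > 0" using \<open>Nr > 0\<close> \<open>Sr \<ge> 0\<close> lam by (intro divide_pos_pos add_pos_nonneg mult_pos_pos)
  ultimately show ?thesis by simp
qed

definition outer :: "nat \<Rightarrow> real vec \<Rightarrow> real mat" where
  "outer n z = mat n n (\<lambda>(i,j). z $ i * z $ j)"

lemma outer_carrier[simp]: "outer n z \<in> carrier_mat n n"
  unfolding outer_def by simp

lemma outer_dims[simp]: "dim_row (outer n z) = n" "dim_col (outer n z) = n"
  unfolding outer_def by auto

lemma det_rank_one:
  fixes V W :: "real mat"
  assumes V: "V \<in> carrier_mat n n" and W: "W \<in> carrier_mat n n"
    and VW: "V * W = 1\<^sub>m n" and z: "z \<in> carrier_vec n"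
  shows "det (V + outer n z) = det V * (1 + z \<bullet> (W *\<^sub>v z))"
proof -
  define y where "y = z \<bullet> (W *\<^sub>v z)"
  define Zc where "Zc = mat n 1 (\<lambda>(i,j). z $ i)"
  define Zr where "Zr = mat 1 n (\<lambda>(i,j). z $ j)"
  have Zc: "Zc \<in> carrier_mat n 1" and Zr: "Zr \<in> carrier_mat 1 n" unfolding Zc_def Zr_def by auto
  have WZc: "W * Zc \<in> carrier_mat n 1" using W Zc by auto
  define X where "X = four_block_mat V Zc (- Zr) (1\<^sub>m 1)"
  define M1 where "M1 = four_block_mat V (0\<^sub>m n 1) (- Zr) (1\<^sub>m 1)"
  define M2 where "M2 = four_block_mat (1\<^sub>m n) (W * Zc) (0\<^sub>m 1 n) (mat 1 1 (\<lambda>_. 1 + y))"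
  define M3 where "M3 = four_block_mat (V + outer n z) Zc (0\<^sub>m 1 n) (1\<^sub>m 1)"
  define M4 where "M4 = four_block_mat (1\<^sub>m n) (0\<^sub>m n 1) (- Zr) (1\<^sub>m 1)"
  have dM1: "det M1 = det V" unfolding M1_def
    by (subst det_four_block_mat_upper_right_zero[OF V refl]) (use Zr in auto)
  have dM2: "det M2 = 1 + y" unfolding M2_def
    by (subst det_four_block_mat_lower_left_zero[OF _ WZc refl]) (auto simp: det_single)
  have dM3: "det M3 = det (V + outer n z)" unfolding M3_def
    by (subst det_four_block_mat_lower_left_zero[OF _ Zc refl]) (use V in auto)
  have dM4: "det M4 = 1" unfolding M4_def
    by (subst det_four_block_mat_upper_right_zero[OF _ refl]) (use Zr in auto)
  have VWZ: "V * (W * Zc) = Zc"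
    using V W Zc VW by (simp add: assoc_mult_mat[symmetric, of V n n W n Zc 1])
  have ZWZ: "- Zr * (W * Zc) + 1\<^sub>m 1 * mat 1 1 (\<lambda>_. 1 + y) = 1\<^sub>m 1"
  proof (rule eq_matI)
    have "(W * Zc) $$ (k, 0) = (W *\<^sub>v z) $ k" if "k < n" for k
      using that W z unfolding Zc_def
      by (simp add: mult_mat_vec_def scalar_prod_def row_def col_def)
    hence "(- Zr * (W * Zc)) $$ (0,0) = - y"
      using W Zc Zr z unfolding y_def
      by (auto simp: scalar_prod_def Zr_def row_def col_def sum_negf[symmetric] intro!: sum.cong)
    thus "\<And>i j. i < dim_row (1\<^sub>m 1) \<Longrightarrow> j < dim_col (1\<^sub>m 1) \<Longrightarrow>
      (- Zr * (W * Zc) + 1\<^sub>m 1 * mat 1 1 (\<lambda>_. 1 + y)) $$ (i, j) = 1\<^sub>m 1 $$ (i, j)"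
      using W Zc Zr by auto
  qed (use W Zc Zr in auto)
  have "M1 * M2 = X" unfolding M1_def M2_def X_def
    by (subst mult_four_block_mat[of _ n n _ 1 _ 1 _ _ n _ 1]) (use V W Zc Zr VWZ ZWZ in auto)
  moreover have "M3 * M4 = X" unfolding M3_def M4_def X_def
  proof (subst mult_four_block_mat[of _ n n _ 1 _ 1 _ _ n _ 1])
    have "Zc * - Zr = - outer n z"
      by (rule eq_matI) (use Zc Zr in \<open>auto simp: Zc_def Zr_def outer_def scalar_prod_def row_def col_def\<close>)
    moreover have "(V + outer n z) * 1\<^sub>m n + - outer n z = V"
    proof -
      have "(V + outer n z) * 1\<^sub>m n = V + outer n z" using V by (intro right_mult_one_mat) auto
      thus ?thesis by (intro eq_matI) (use V in auto)
    qed
    ultimately have "(V + outer n z) * 1\<^sub>m n + Zc * - Zr = V" by simp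
    thus "four_block_mat ((V + outer n z) * 1\<^sub>m n + Zc * - Zr) ((V + outer n z) * 0\<^sub>m n 1 + Zc * 1\<^sub>m 1)
     (0\<^sub>m 1 n * 1\<^sub>m n + 1\<^sub>m 1 * - Zr) (0\<^sub>m 1 n * 0\<^sub>m n 1 + 1\<^sub>m 1 * 1\<^sub>m 1) =
    four_block_mat V Zc (- Zr) (1\<^sub>m 1)" using V Zc Zr by simp
  qed (use V Zc Zr in auto)
  ultimately have "det (M1 * M2) = det (M3 * M4)" by simp
  moreover have "det (M1 * M2) = det M1 * det M2"
    by (rule det_mult[of _ "n+1"]) (use V W Zc Zr in \<open>auto simp: M1_def M2_def\<close>)
  moreover have "det (M3 * M4) = det M3 * det M4"
    by (rule det_mult[of _ "n+1"]) (use V W Zc Zr in \<open>auto simp: M3_def M4_def\<close>)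
  ultimately show ?thesis using dM1 dM2 dM3 dM4 y_def by simp
qed

lemma Vbar_Suc:
  assumes "1 \<le> t"
  shows "Vbar n lam z (Suc t) = Vbar n lam z t + outer n (z t)"
  by (rule eq_matI) (use assms in \<open>auto simp: Vbar_index outer_def\<close>)

lemma Vbar_quad:
  assumes u: "u \<in> carrier_vec n"
  shows "u \<bullet> (Vbar n lam z t *\<^sub>v u) = lam * (u \<bullet> u) + (\<Sum>s\<in>{1..<t}. (z s \<bullet> u)\<^sup>2)"
proof -
  define S where "S = {1..<t}"
  have Vu: "(Vbar n lam z t *\<^sub>v u) $ i = lam * u $ i + (\<Sum>s\<in>S. z s $ i * (z s \<bullet> u))"
    if i: "i < n" for i
  proof -
    have "(Vbar n lam z t *\<^sub>v u) $ i = (\<Sum>j<n. Vbar n lam z t $$ (i,j) * u $ j)"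
      using u i by (simp add: mult_mat_vec_def scalar_prod_def atLeast0LessThan)
    also have "\<dots> = (\<Sum>j<n. (if i = j then lam * u $ j else 0)
         + (\<Sum>s\<in>S. z s $ i * (z s $ j * u $ j)))"
      using i by (intro sum.cong refl) (simp add: Vbar_index S_def distrib_right sum_distrib_right mult.assoc)
    also have "\<dots> = lam * u $ i + (\<Sum>s\<in>S. z s $ i * (z s \<bullet> u))"
      using i u by (simp add: sum.distrib sum.swap[of _ S] sum_distrib_left scalar_prod_def atLeast0LessThan)
    finally show ?thesis .
  qed
  have "u \<bullet> (Vbar n lam z t *\<^sub>v u) = (\<Sum>i<n. u $ i * (Vbar n lam z t *\<^sub>v u) $ i)"
    using u by (simp add: scalar_prod_def atLeast0LessThan)
  also have "\<dots> = (\<Sum>i<n. lam * (u $ i * u $ i)) + (\<Sum>i<n. \<Sum>s\<in>S. (z s $ i * u $ i) * (z s \<bullet> u))"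
    using Vu by (simp add: sum.distrib distrib_left sum_distrib_left algebra_simps)
  also have "(\<Sum>i<n. \<Sum>s\<in>S. (z s $ i * u $ i) * (z s \<bullet> u)) = (\<Sum>s\<in>S. (z s \<bullet> u)\<^sup>2)"
    using u by (subst sum.swap) (simp add: sum_distrib_right[symmetric] scalar_prod_def atLeast0LessThan power2_eq_square)
  also have "(\<Sum>i<n. lam * (u $ i * u $ i)) = lam * (u \<bullet> u)"
    using u by (simp add: sum_distrib_left scalar_prod_def atLeast0LessThan)
  finally show ?thesis unfolding S_def .
qed

lemma Vbar_inv:
  assumes lam: "lam > 0" and n: "n > 0"
  shows "0 < det (Vbar n lam z t) \<and> Vbar n lam z t * minv (Vbar n lam z t) = 1\<^sub>m n
     \<and> minv (Vbar n lam z t) \<in> carrier_mat n n"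
proof -
  let ?V = "Vbar n lam z t"
  have V: "?V \<in> carrier_mat n n" by simp
  have dpos: "0 < det ?V" using det_le_mtr[OF V n] Vbar_ev[OF lam] by blast
  have "?V \<in> Units (ring_mat TYPE(real) n ())"
    by (rule det_non_zero_imp_unit[OF V]) (use dpos in auto)
  hence "mat_inverse ?V \<noteq> None" using mat_inverse(1)[OF V, of "()"] by blast
  then obtain W where W: "mat_inverse ?V = Some W" by blast
  from mat_inverse(2)[OF V W] W dpos show ?thesis unfolding minv_def by auto
qed

lemma y_bounds:
  assumes lam: "lam > 0" and n: "n > 0" and zt: "zt \<in> carrier_vec n"
  shows "0 \<le> wnorm_sq zt (minv (Vbar n lam z t)) \<and> wnorm_sq zt (minv (Vbar n lam z t)) \<le> (zt \<bullet> zt) / lam"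
proof -
  define V where "V = Vbar n lam z t"
  define W where "W = minv V"
  have V: "V \<in> carrier_mat n n" unfolding V_def by simp
  from Vbar_inv[OF lam n, of z t] have VW: "V * W = 1\<^sub>m n" and W: "W \<in> carrier_mat n n"
    unfolding V_def W_def by auto
  define q where "q = W *\<^sub>v zt"
  have q: "q \<in> carrier_vec n" using W zt q_def by simp
  have Vq: "V *\<^sub>v q = zt" unfolding q_def
    using V W zt VW by (simp add: assoc_mult_mat_vec[symmetric, of V n n W n zt])
  define y where "y = zt \<bullet> q"
  have ydef: "wnorm_sq zt (minv (Vbar n lam z t)) = y"
    unfolding wnorm_sq_def y_def q_def W_def V_def ..
  have "y = q \<bullet> (V *\<^sub>v q)" unfolding y_def using Vq q zt by (simp add: comm_scalar_prod[of q n])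
  also have "\<dots> = lam * (q \<bullet> q) + (\<Sum>s\<in>{1..<t}. (z s \<bullet> q)\<^sup>2)" unfolding V_def by (rule Vbar_quad[OF q])
  finally have y1: "y \<ge> lam * (q \<bullet> q)" by (simp add: sum_nonneg)
  have qq: "q \<bullet> q \<ge> 0" using q by (simp add: scalar_prod_def sum_nonneg)
  have "2 * y \<le> (zt \<bullet> zt) / lam + lam * (q \<bullet> q)"
  proof -
    have "2 * y = (\<Sum>i<n. 2 * (zt $ i * q $ i))" unfolding y_def using q zt
      by (simp add: scalar_prod_def atLeast0LessThan sum_distrib_left)
    also have "\<dots> \<le> (\<Sum>i<n. (zt $ i * zt $ i) / lam + lam * (q $ i * q $ i))"
    proof (rule sum_mono)
      fix i
      have "0 \<le> (zt $ i - lam * q $ i)\<^sup>2" by simp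
      hence "2 * lam * (zt $ i * q $ i) \<le> zt $ i * zt $ i + lam * lam * (q $ i * q $ i)"
        by (simp add: power2_eq_square algebra_simps)
      thus "2 * (zt $ i * q $ i) \<le> (zt $ i * zt $ i) / lam + lam * (q $ i * q $ i)"
        using lam by (simp add: field_simps)
    qed
    also have "\<dots> = (zt \<bullet> zt) / lam + lam * (q \<bullet> q)" using q zt
      by (simp add: scalar_prod_def atLeast0LessThan sum.distrib sum_distrib_left sum_divide_distrib)
    finally show ?thesis .
  qed
  hence "y \<le> (zt \<bullet> zt) / lam" using y1 by linarith
  moreover have "0 \<le> y" using y1 qq lam by (meson mult_nonneg_nonneg less_imp_le order_trans)
  ultimately show ?thesis unfolding ydef by simp
qed

lemma scal_bound:
  fixes y B :: real
  assumes y0: "0 \<le> y" and yB: "y \<le> B"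
  shows "y \<le> (2 + B / ln 2) * ln (1 + y)"
proof -
  have l2: "ln 2 > (0::real)" by simp
  have B0: "B / ln 2 \<ge> 0" using y0 yB l2 by simp
  have lny: "ln (1 + y) \<ge> 0" using y0 by simp
  show ?thesis
  proof (cases "y \<le> 1")
    case True
    have "ln (1 / (1 + y)) \<le> 1 / (1 + y) - 1" using y0 by (intro ln_le_minus_one) auto
    hence "ln (1 + y) \<ge> y / (1 + y)" using y0 by (simp add: ln_div field_simps)
    moreover have "y / (1 + y) \<ge> y / 2" using y0 True by (intro divide_left_mono) auto
    ultimately have "y / 2 \<le> ln (1 + y)" by linarith
    hence "y \<le> 2 * ln (1 + y)" by linarith
    also have "\<dots> \<le> (2 + B / ln 2) * ln (1 + y)" using B0 lny by (simp add: mult_right_mono)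
    finally show ?thesis .
  next
    case False
    have "ln 2 \<le> ln (1 + y)" using False by simp
    hence "B / ln 2 * ln 2 \<le> B / ln 2 * ln (1 + y)" using B0 by (rule mult_left_mono)
    hence "B \<le> B / ln 2 * ln (1 + y)" using l2 by simp
    also have "\<dots> \<le> (2 + B / ln 2) * ln (1 + y)" using lny by (simp add: distrib_right)
    finally show ?thesis using yB by simp
  qed
qed

lemma treat_props:
  assumes v: "v \<in> treat_set M"
  shows "v \<in> carrier_vec M" "\<And>i. i < M \<Longrightarrow> v $ i = 0 \<or> v $ i = 1" "(\<Sum>i<M. v $ i) \<le> 1"
proof -
  from v show vc: "v \<in> carrier_vec M" unfolding treat_set_def by auto
  from v show 01: "\<And>i. i < M \<Longrightarrow> v $ i = 0 \<or> v $ i = 1" unfolding treat_set_def by auto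
  have c: "card {i. i < M \<and> v $ i \<noteq> 0} \<le> 1" using v unfolding treat_set_def by auto
  have "(\<Sum>i<M. v $ i) = (\<Sum>i\<in>{i\<in>{..<M}. v $ i \<noteq> 0}. v $ i)"
    by (subst sum.inter_filter) (auto intro!: sum.cong)
  also have "\<dots> = (\<Sum>i\<in>{i\<in>{..<M}. v $ i \<noteq> 0}. 1)" using 01 by (intro sum.cong) force+
  also have "\<dots> = real (card {i. i < M \<and> v $ i \<noteq> 0})" by simp
  finally show "(\<Sum>i<M. v $ i) \<le> 1" using c by simp
qed

lemma treat_sq:
  assumes v: "v \<in> treat_set M"
  shows "v \<bullet> v \<le> 1"
proof -
  note p = treat_props[OF v]
  have "v \<bullet> v = (\<Sum>i<M. v $ i * v $ i)" using p(1) by (simp add: scalar_prod_def atLeast0LessThan)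
  also have "\<dots> = (\<Sum>i<M. v $ i)" using p(2) by (intro sum.cong) force+
  finally show ?thesis using p(3) by simp
qed

lemma treat_dot:
  assumes v: "v \<in> treat_set M" and b: "sup_norm_le M b bb" and M: "M \<ge> 1"
  shows "\<bar>b \<bullet> v\<bar> \<le> bb"
proof -
  note p = treat_props[OF v]
  have bb: "bb \<ge> 0" using b M unfolding sup_norm_le_def
    using abs_ge_zero[of "b $ 0"] by force
  have "\<bar>b \<bullet> v\<bar> = \<bar>\<Sum>i<M. b $ i * v $ i\<bar>" using p(1) by (simp add: scalar_prod_def atLeast0LessThan)
  also have "\<dots> \<le> (\<Sum>i<M. \<bar>b $ i * v $ i\<bar>)" by (rule sum_abs)
  also have "\<dots> \<le> (\<Sum>i<M. bb * v $ i)"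
  proof (rule sum_mono)
    fix i assume "i \<in> {..<M}"
    hence i: "i < M" by simp
    show "\<bar>b $ i * v $ i\<bar> \<le> bb * v $ i"
      using p(2)[OF i] b i bb unfolding sup_norm_le_def by (auto simp: abs_mult)
  qed
  also have "\<dots> = bb * (\<Sum>i<M. v $ i)" by (simp add: sum_distrib_left)
  also have "\<dots> \<le> bb" using p(3) bb by (simp add: mult_left_le)
  finally show ?thesis .
qed

theorem mainTheorem16:
  fixes M :: nat and abar bbar cbar wbar a lam1 :: real
    and b c :: "real vec"
    and x :: "nat \<Rightarrow> real" and w :: "nat \<Rightarrow> real"
    and u d :: "nat \<Rightarrow> real vec" and T :: nat
  assumes M: "M \<ge> 1"
    and abar: "0 < abar" "abar < 1"
    and wbar: "wbar > 0"
    and a: "0 \<le> a" "a \<le> abar"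
    and b: "sup_norm_le M b bbar"
    and c: "sup_norm_le M c cbar"
    and noise: "\<And>t. \<bar>w t\<bar> \<le> wbar"
    and init: "x 1 = w 0"
    and actions: "\<And>t. t \<ge> 1 \<Longrightarrow> u t \<in> treat_set M"
    and adherence: "\<And>t. t \<ge> 1 \<Longrightarrow> d t \<in> treat_set M"
    and adh_support: "\<And>t i. t \<ge> 1 \<Longrightarrow> i < M \<Longrightarrow> d t $ i \<le> u t $ i"
    and dyn: "\<And>t. t \<ge> 1 \<Longrightarrow> x (t + 1) = a * x t + b \<bullet> u t + c \<bullet> d t + w t"
    and lam1: "lam1 > 0"
  shows "(let Cx = (bbar + cbar + wbar) / (1 - abar);
              n = 2 * M + 1;
              z = (\<lambda>t. zvec (x t) (u t) (d t))
          in (\<Sum>t = 1..T. wnorm_sq (z t) (minv (Vbar n lam1 z t)))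
             \<le> real n * ln (1 + real T * (Cx\<^sup>2 + 2) / (real n * lam1))
               * (2 + (Cx\<^sup>2 + 2) / (ln 2 * lam1)))"
proof -
  define Cx where "Cx = (bbar + cbar + wbar) / (1 - abar)"
  define n where "n = 2 * M + 1"
  define z where "z = (\<lambda>t. zvec (x t) (u t) (d t))"
  define L where "L = Cx\<^sup>2 + 2"
  define K where "K = 2 + L / (ln 2 * lam1)"
  define y where "y t = wnorm_sq (z t) (minv (Vbar n lam1 z t))" for t
  have n: "n > 0" unfolding n_def by simp
  have bb: "bbar \<ge> 0" using b M unfolding sup_norm_le_def using abs_ge_zero[of "b $ 0"] by force
  have cb: "cbar \<ge> 0" using c M unfolding sup_norm_le_def using abs_ge_zero[of "c $ 0"] by force
  have Cxe: "bbar + cbar + wbar = (1 - abar) * Cx" unfolding Cx_def using abar by simp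
  have Cx0: "Cx \<ge> 0" unfolding Cx_def using abar bb cb wbar by simp
  have zc: "z t \<in> carrier_vec n" if "t \<ge> 1" for t
  proof -
    have "vec 1 (\<lambda>_. x t) @\<^sub>v u t @\<^sub>v d t \<in> carrier_vec (1 + (M + M))"
      using treat_props(1)[OF actions[OF that]] treat_props(1)[OF adherence[OF that]]
      by (intro append_carrier_vec) auto
    moreover have "1 + (M + M) = n" unfolding n_def by simp
    ultimately show ?thesis unfolding z_def zvec_def by simp
  qed
  have xb: "\<bar>x t\<bar> \<le> Cx" if "t \<ge> 1" for t
    using that
  proof (induction t rule: nat_induct_at_least)
    case base
    have "wbar \<le> bbar + cbar + wbar" using bb cb by simp
    also have "\<dots> \<le> Cx" using Cxe Cx0 abar by (simp add: mult_left_le_one_le)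
    finally show ?case using init noise[of 0] by simp
  next
    case (Suc t)
    have e1: "\<bar>x (Suc t)\<bar> = \<bar>a * x t + b \<bullet> u t + c \<bullet> d t + w t\<bar>"
      using dyn[OF Suc.hyps] by simp
    have e2: "\<bar>a * x t + b \<bullet> u t + c \<bullet> d t + w t\<bar> \<le> \<bar>a * x t\<bar> + \<bar>b \<bullet> u t\<bar> + \<bar>c \<bullet> d t\<bar> + \<bar>w t\<bar>"
      using abs_triangle_ineq[of "a * x t + b \<bullet> u t + c \<bullet> d t" "w t"]
        abs_triangle_ineq[of "a * x t + b \<bullet> u t" "c \<bullet> d t"] abs_triangle_ineq[of "a * x t" "b \<bullet> u t"]
      by linarith
    have e3: "\<bar>a * x t\<bar> = a * \<bar>x t\<bar>" using a by (simp add: abs_mult)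
    have e4: "a * \<bar>x t\<bar> \<le> abar * Cx" using Suc.IH a by (intro mult_mono) auto
    have e5: "\<bar>b \<bullet> u t\<bar> \<le> bbar" by (rule treat_dot[OF actions[OF Suc.hyps] b M])
    have e6: "\<bar>c \<bullet> d t\<bar> \<le> cbar" by (rule treat_dot[OF adherence[OF Suc.hyps] c M])
    have e7: "\<bar>w t\<bar> \<le> wbar" by (rule noise)
    have e8: "abar * Cx + bbar + cbar + wbar = Cx" using Cxe by (simp add: algebra_simps)
    show ?case using e1 e2 e3 e4 e5 e6 e7 e8 by linarith
  qed
  have zz: "z t \<bullet> z t \<le> L" if t: "t \<ge> 1" for t
  proof -
    have uc: "u t \<in> carrier_vec M" and dc: "d t \<in> carrier_vec M"
      using treat_props(1)[OF actions[OF t]] treat_props(1)[OF adherence[OF t]] by auto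
    have "z t \<bullet> z t = vec 1 (\<lambda>_. x t) \<bullet> vec 1 (\<lambda>_. x t) + (u t \<bullet> u t + d t \<bullet> d t)"
      unfolding z_def zvec_def using uc dc
      by (simp add: scalar_prod_append[of _ 1 _ "M+M"] scalar_prod_append[of _ M _ M])
    also have "vec 1 (\<lambda>_. x t) \<bullet> vec 1 (\<lambda>_. x t) = (x t)\<^sup>2"
      by (simp add: scalar_prod_def power2_eq_square)
    finally have e: "z t \<bullet> z t = (x t)\<^sup>2 + (u t \<bullet> u t + d t \<bullet> d t)" .
    have "(x t)\<^sup>2 \<le> Cx\<^sup>2" using xb[OF t] by (metis abs_le_square_iff abs_of_nonneg Cx0)
    thus ?thesis using e treat_sq[OF actions[OF t]] treat_sq[OF adherence[OF t]] unfolding L_def by linarith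
  qed
  have yb: "0 \<le> y t \<and> y t \<le> L / lam1" if t: "t \<ge> 1" for t
  proof -
    have "0 \<le> y t \<and> y t \<le> (z t \<bullet> z t) / lam1" unfolding y_def by (rule y_bounds[OF lam1 n zc[OF t]])
    moreover have "(z t \<bullet> z t) / lam1 \<le> L / lam1" using zz[OF t] lam1 by (simp add: divide_right_mono)
    ultimately show ?thesis by linarith
  qed
  have ys: "y t \<le> K * ln (1 + y t)" if t: "t \<ge> 1" for t
    using scal_bound[of "y t" "L / lam1"] yb[OF t] unfolding K_def by (simp add: field_simps)
  have detV: "det (Vbar n lam1 z (Suc T')) = lam1 ^ n * (\<Prod>t\<in>{1..T'}. (1 + y t))" for T'
  proof (induction T')
    case 0
    have "Vbar n lam1 z (Suc 0) = lam1 \<cdot>\<^sub>m 1\<^sub>m n" by (rule eq_matI) (auto simp: Vbar_index)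
    then show ?case by (simp add: det_smult)
  next
    case (Suc T')
    have "det (Vbar n lam1 z (Suc (Suc T'))) = det (Vbar n lam1 z (Suc T') + outer n (z (Suc T')))"
      by (simp add: Vbar_Suc)
    also have "\<dots> = det (Vbar n lam1 z (Suc T')) * (1 + y (Suc T'))"
      using Vbar_inv[OF lam1 n, of z "Suc T'"] zc[of "Suc T'"] unfolding y_def wnorm_sq_def
      by (intro det_rank_one) auto
    finally show ?case using Suc.IH by simp
  qed
  have trEq: "mtr (Vbar n lam1 z (Suc T)) = n * lam1 + (\<Sum>s\<in>{1..T}. z s \<bullet> z s)"
  proof -
    have "mtr (Vbar n lam1 z (Suc T)) = (\<Sum>i<n. lam1 + (\<Sum>s\<in>{1..T}. z s $ i * z s $ i))"
      unfolding mtr_def by (intro sum.cong) (auto simp: Vbar_index atLeastLessThanSuc_atLeastAtMost)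
    also have "\<dots> = n * lam1 + (\<Sum>i<n. \<Sum>s\<in>{1..T}. z s $ i * z s $ i)"
      by (simp add: sum.distrib)
    also have "(\<Sum>i<n. \<Sum>s\<in>{1..T}. z s $ i * z s $ i) = (\<Sum>s\<in>{1..T}. \<Sum>i<n. z s $ i * z s $ i)"
      by (rule sum.swap)
    also have "\<dots> = (\<Sum>s\<in>{1..T}. z s \<bullet> z s)"
    proof (intro sum.cong refl)
      fix s assume "s \<in> {1..T}"
      hence "dim_vec (z s) = n" using zc[of s] by auto
      thus "(\<Sum>i<n. z s $ i * z s $ i) = z s \<bullet> z s" by (simp add: scalar_prod_def atLeast0LessThan)
    qed
    finally show ?thesis .
  qed
  have zz0: "(\<Sum>s\<in>{1..T}. z s \<bullet> z s) \<ge> 0"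
    by (intro sum_nonneg) (simp add: scalar_prod_def sum_nonneg)
  have "(\<Sum>s\<in>{1..T}. z s \<bullet> z s) \<le> (\<Sum>s\<in>{1..T}. L)" by (intro sum_mono zz) auto
  hence trV: "mtr (Vbar n lam1 z (Suc T)) \<le> n * lam1 + T * L" using trEq by simp
  have trpos: "mtr (Vbar n lam1 z (Suc T)) \<ge> n * lam1" using trEq zz0 by simp
  let ?V = "Vbar n lam1 z (Suc T)"
  have dl: "0 < det ?V \<and> det ?V \<le> (mtr ?V / n) ^ n"
    using det_le_mtr[OF Vbar_carrier n] Vbar_ev[OF lam1] by blast
  have ppos: "\<forall>t\<in>{1..T}. 1 + y t > 0" using yb by force
  have "0 < n * lam1" using n lam1 by simp
  hence mpos: "0 < mtr ?V / n" using trpos n by (intro divide_pos_pos) auto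
  have L0: "0 \<le> T * L / (n * lam1)" unfolding L_def using n lam1 by simp
  have "n * ln lam1 + (\<Sum>t\<in>{1..T}. ln (1 + y t)) = ln (det ?V)"
  proof -
    have P: "(\<Prod>t\<in>{1..T}. (1 + y t)) > 0" using ppos by (intro prod_pos) auto
    have "ln (lam1 ^ n * (\<Prod>t\<in>{1..T}. (1 + y t))) = ln (lam1 ^ n) + ln (\<Prod>t\<in>{1..T}. (1 + y t))"
      using P lam1 by (intro ln_mult_pos) auto
    also have "ln (lam1 ^ n) = n * ln lam1" using lam1 by (simp add: ln_realpow)
    also have "ln (\<Prod>t\<in>{1..T}. (1 + y t)) = (\<Sum>t\<in>{1..T}. ln (1 + y t))"
      using ppos by (intro ln_prod) force+
    finally show ?thesis unfolding detV by simp
  qed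
  also have "\<dots> \<le> ln ((mtr ?V / n) ^ n)"
  proof -
    have "0 < (mtr ?V / n) ^ n" using dl by linarith
    thus ?thesis using dl by (subst ln_le_cancel_iff) auto
  qed
  also have "ln ((mtr ?V / n) ^ n) = n * ln (mtr ?V / n)" using mpos by (simp add: ln_realpow)
  also have "\<dots> \<le> n * ln (lam1 * (1 + T * L / (n * lam1)))"
  proof -
    have "mtr ?V / n \<le> (n * lam1 + T * L) / n" using trV n by (simp add: divide_right_mono)
    also have "(n * lam1 + T * L) / n = lam1 * (1 + T * L / (n * lam1))" using n lam1 by (simp add: field_simps)
    finally have "ln (mtr ?V / n) \<le> ln (lam1 * (1 + T * L / (n * lam1)))" using mpos by simp
    thus ?thesis using n by (simp add: mult_left_mono)
  qed
  also have "ln (lam1 * (1 + T * L / (n * lam1))) = ln lam1 + ln (1 + T * L / (n * lam1))"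
    using lam1 L0 by (intro ln_mult_pos) auto
  finally have lnsum: "(\<Sum>t\<in>{1..T}. ln (1 + y t)) \<le> n * ln (1 + T * L / (n * lam1))"
    by (simp add: distrib_left)
  have K0: "K \<ge> 0" unfolding K_def L_def using lam1 by simp
  have "(\<Sum>t=1..T. y t) \<le> (\<Sum>t=1..T. K * ln (1 + y t))" by (intro sum_mono ys) auto
  also have "\<dots> = K * (\<Sum>t=1..T. ln (1 + y t))" by (simp add: sum_distrib_left)
  also have "\<dots> \<le> K * (n * ln (1 + T * L / (n * lam1)))" using lnsum K0 by (rule mult_left_mono)
  finally have "(\<Sum>t=1..T. y t) \<le> n * ln (1 + T * L / (n * lam1)) * K" by (simp add: mult.commute)
  thus ?thesis unfolding Let_def Cx_def[symmetric] n_def[symmetric] z_def[symmetric] y_def[symmetric]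
    L_def[symmetric] K_def[symmetric] by simp
qed

end
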